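(* Let $n\geq 2$ and $2\leq i\leq n$. For any $\sigma\in S_{n-1}(1,i)$, $$Q(\sigma)=(-1)^{i-1}\sum_{2\leq m_1<\dots<m_{i-1}\leq n}Q\big(\sigma C_{m_{i-1}}^{-1}\cdots C_{m_1}^{-1}\big).$$
   Context: Let $y_1,\dots,y_n$ be indeterminates and $u_{ij}:=y_i-y_j$ (so $u_{ij}+u_{ji}=0$ and $u_{ij}+u_{jk}+u_{ki}=0$). For $\sigma\in S_n$ set $Q(\sigma):=1/(u_{\sigma(1)\sigma(2)}u_{\sigma(2)\sigma(3)}\cdots u_{\sigma(n-1)\sigma(n)})$, an element of the field of rational functions in the $y_i$. Permutations are composed right-to-left: $(\sigma\tau)(k)=\sigma(\tau(k))$. $S_{n-1}\subset S_n$ is the subgroup of $\tau$ with $\tau(1)=1$, $S_{n-1}(1,i)=\{\tau\cdot(1,i):\tau\in S_{n-1}\}$, and for $m\geq 2$, $C_m$ is the cycle $(1,m,m-1,\dots,2)$ (i.e. $1\mapsto m\mapsto m-1\mapsto\dots\mapsto 2\mapsto 1$). *)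

theory Defs
  imports "HOL-Combinatorics.Transposition" "HOL-Combinatorics.Permutations"
begin

text \<open>The indeterminates y_1..y_n are rendered as pairwise distinct elements y 1, ..., y n
  of an arbitrary field; u_ij = y i - y j.\<close>

definition Qf :: "(nat \<Rightarrow> 'a::field) \<Rightarrow> nat \<Rightarrow> (nat \<Rightarrow> nat) \<Rightarrow> 'a" where
  "Qf y n \<sigma> = 1 / (\<Prod>k\<in>{1..<n}. (y (\<sigma> k) - y (\<sigma> (Suc k))))"

definition Ccyc :: "nat \<Rightarrow> nat \<Rightarrow> nat" where
  "Ccyc m k = (if k = 1 then m else if 2 \<le> k \<and> k \<le> m then k - 1 else k)"

text \<open>For ms = [m_1, ..., m_r], the permutation C_{m_r}^{-1} \<circ> ... \<circ> C_{m_1}^{-1}.\<close>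
definition Cinv_prod :: "nat list \<Rightarrow> nat \<Rightarrow> nat" where
  "Cinv_prod ms = fold (\<lambda>m f. inv (Ccyc m) \<circ> f) ms id"

end

theory Submission
  imports Defs
begin


fun Ql :: "'a::field list \<Rightarrow> 'a" where
  "Ql (a # b # xs) = inverse (a - b) * Ql (b # xs)"
| "Ql _ = 1"

lemma Ql_append: "Ql (xs @ a # b # zs) = Ql (xs @ [a]) * inverse (a - b) * Ql (b # zs)"
proof (induction xs rule: Ql.induct)
  case (1 c d xs) then show ?case by (simp add: mult.assoc)
next
  case "2_1" then show ?case by simp
next
  case ("2_2" c) then show ?case by simp
qed

lemma Ql_snoc: "Ql (xs @ [a, b]) = Ql (xs @ [a]) * inverse (a - b)"
  using Ql_append[of xs a b "[]"] by simp

lemma Ql_rev: "Ql (rev xs) = (-1) ^ (length xs - 1) * Ql xs"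
proof (induction xs rule: Ql.induct)
  case (1 a b xs)
  have "Ql (rev (a # b # xs)) = Ql (rev (b # xs) @ [a])" by simp
  also have "rev (b#xs) = rev xs @ [b]" by simp
  also have "Ql ((rev xs @ [b]) @ [a]) = Ql (rev xs @ [b]) * inverse (b - a)"
    using Ql_snoc[of "rev xs" b a] by simp
  also have "Ql (rev xs @ [b]) = (-1) ^ (length xs) * Ql (b # xs)"
    using 1 by simp
  also have "inverse (b - a) = - inverse (a - b)"
    by (metis inverse_minus_eq minus_diff_eq)
  finally show ?case
    by (simp add: algebra_simps)
qed auto

definition merge :: "nat set \<Rightarrow> 'a list \<Rightarrow> 'a list \<Rightarrow> 'a list" where
  "merge M u v = map (\<lambda>k. if k \<in> M then u ! card {m\<in>M. m < k} else v ! card ({..<k} - M))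
      [0..<length u + length v]"

lemma length_merge[simp]: "length (merge M u v) = length u + length v"
  by (simp add: merge_def)

lemma merge_empty: "merge {} [] v = v"
  by (simp add: merge_def map_nth)

lemma merge_full: "merge {0..<length u} u [] = u"
proof -
  have "{m. m < length u \<and> m < k} = {..<k}" if "k < length u" for k using that by auto
  then show ?thesis by (auto simp: merge_def intro!: nth_equalityI)
qed

lemma merge_Cons1: "merge (insert 0 (Suc ` M)) (a # u) v = a # merge M u v"
proof -
  have e1: "{m \<in> insert 0 (Suc ` M). m < Suc k} = insert 0 (Suc ` {m\<in>M. m < k})" for k
    by auto
  have e2: "{..<Suc k} - insert 0 (Suc ` M) = Suc ` ({..<k} - M)" for k
  proof (rule set_eqI)
    fix j show "j \<in> {..<Suc k} - insert 0 (Suc ` M) \<longleftrightarrow> j \<in> Suc ` ({..<k} - M)"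
      by (cases j) auto
  qed
  have c1: "card {m \<in> insert 0 (Suc ` M). m < Suc k} = Suc (card {m\<in>M. m < k})" for k
  proof -
    have "finite {m\<in>M. m < k}" by simp
    then show ?thesis unfolding e1 by (subst card_insert_disjoint) (auto simp: card_image)
  qed
  have c2: "card ({..<Suc k} - insert 0 (Suc ` M)) = card ({..<k} - M)" for k
    unfolding e2 by (simp add: card_image)
  have m1: "Suc k \<in> insert 0 (Suc ` M) \<longleftrightarrow> k \<in> M" for k by auto
  show ?thesis
  proof (rule nth_equalityI)
    show "length (merge (insert 0 (Suc ` M)) (a # u) v) = length (a # merge M u v)" by simp
  next
    fix j assume j: "j < length (merge (insert 0 (Suc ` M)) (a # u) v)"
    show "merge (insert 0 (Suc ` M)) (a # u) v ! j = (a # merge M u v) ! j"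
    proof (cases j)
      case 0 then show ?thesis by (simp add: merge_def nth_Cons' del: upt_Suc)
    next
      case (Suc k)
      then have k: "k < length u + length v" using j by simp
      have "merge (insert 0 (Suc ` M)) (a # u) v ! j =
        (if Suc k \<in> insert 0 (Suc ` M) then (a#u) ! card {m \<in> insert 0 (Suc ` M). m < Suc k}
         else v ! card ({..<Suc k} - insert 0 (Suc ` M)))"
        unfolding merge_def using Suc k by (simp del: upt_Suc)
      also have "\<dots> = (if k \<in> M then u ! card {m\<in>M. m < k} else v ! card ({..<k} - M))"
        unfolding m1 c1 c2 by simp
      also have "\<dots> = (a # merge M u v) ! j" using Suc k by (simp add: merge_def del: upt_Suc)
      finally show ?thesis .
    qed
  qed
qed

lemma merge_Cons2: "merge (Suc ` M) u (b # v) = b # merge M u v"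
proof -
  have e1: "{m \<in> Suc ` M. m < Suc k} = Suc ` {m\<in>M. m < k}" for k
    by auto
  have e2: "{..<Suc k} - Suc ` M = insert 0 (Suc ` ({..<k} - M))" for k
  proof (rule set_eqI)
    fix j show "j \<in> {..<Suc k} - Suc ` M \<longleftrightarrow> j \<in> insert 0 (Suc ` ({..<k} - M))"
      by (cases j) auto
  qed
  have c1: "card {m \<in> Suc ` M. m < Suc k} = card {m\<in>M. m < k}" for k
    unfolding e1 by (simp add: card_image)
  have c2: "card ({..<Suc k} - Suc ` M) = Suc (card ({..<k} - M))" for k
  proof -
    have "finite ({..<k} - M)" by simp
    then show ?thesis unfolding e2 by (subst card_insert_disjoint) (auto simp: card_image)
  qed
  have m1: "Suc k \<in> Suc ` M \<longleftrightarrow> k \<in> M" for k by auto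
  have m0: "0 \<notin> Suc ` M" by auto
  show ?thesis
  proof (rule nth_equalityI)
    show "length (merge (Suc ` M) u (b # v)) = length (b # merge M u v)" by simp
  next
    fix j assume j: "j < length (merge (Suc ` M) u (b # v))"
    show "merge (Suc ` M) u (b # v) ! j = (b # merge M u v) ! j"
    proof (cases j)
      case 0 then show ?thesis using j m0 by (simp add: merge_def del: upt_Suc)
    next
      case (Suc k)
      then have k: "k < length u + length v" using j by simp
      have "merge (Suc ` M) u (b # v) ! j =
        (if Suc k \<in> Suc ` M then u ! card {m \<in> Suc ` M. m < Suc k}
         else (b#v) ! card ({..<Suc k} - Suc ` M))"
        unfolding merge_def using Suc k by (simp del: upt_Suc)
      also have "\<dots> = (if k \<in> M then u ! card {m\<in>M. m < k} else v ! card ({..<k} - M))"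
        unfolding m1 c1 c2 by simp
      also have "\<dots> = (b # merge M u v) ! j" using Suc k by (simp add: merge_def del: upt_Suc)
      finally show ?thesis .
    qed
  qed
qed

lemma split_sets:
  "{M. M \<subseteq> {0..<Suc N} \<and> card M = Suc r} =
     (\<lambda>M. insert 0 (Suc ` M)) ` {M. M \<subseteq> {0..<N} \<and> card M = r}
   \<union> (\<lambda>M. Suc ` M) ` {M. M \<subseteq> {0..<N} \<and> card M = Suc r}" (is "?L = ?A \<union> ?B")
proof (rule set_eqI)
  fix X
  show "X \<in> ?L \<longleftrightarrow> X \<in> ?A \<union> ?B"
  proof
    assume X: "X \<in> ?L"
    define M where "M = {k. Suc k \<in> X}"
    have SM: "Suc ` M = X - {0}"
    proof (rule set_eqI)
      fix k show "k \<in> Suc ` M \<longleftrightarrow> k \<in> X - {0}"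
        unfolding M_def by (cases k) auto
    qed
    have MN: "M \<subseteq> {0..<N}" using X unfolding M_def by auto
    have fX: "finite X" using X finite_subset by auto
    have cM: "card M = card (X - {0})" unfolding SM[symmetric] by (simp add: card_image)
    show "X \<in> ?A \<union> ?B"
    proof (cases "0 \<in> X")
      case True
      then have "X = insert 0 (Suc ` M)" using SM by auto
      moreover have "card M = r" using cM True X fX by simp
      ultimately have "X \<in> ?A" using MN by blast
      then show ?thesis by blast
    next
      case False
      then have "X = Suc ` M" using SM by auto
      moreover have "card M = Suc r" using cM False X by simp
      ultimately have "X \<in> ?B" using MN by blast
      then show ?thesis by blast
    qed
  next
    assume "X \<in> ?A \<union> ?B"
    then show "X \<in> ?L"
    proof
      assume "X \<in> ?A"
      then obtain M where M: "M \<subseteq> {0..<N}" "card M = r" and X: "X = insert 0 (Suc ` M)" by auto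
      have "finite M" using M(1) finite_subset by blast
      then have "card X = Suc r" unfolding X using M(2)
        by (subst card_insert_disjoint) (auto simp: card_image)
      moreover have "X \<subseteq> {0..<Suc N}" using M(1) X by auto
      ultimately show ?thesis by simp
    next
      assume "X \<in> ?B"
      then obtain M where M: "M \<subseteq> {0..<N}" "card M = Suc r" and X: "X = Suc ` M" by auto
      have "card X = Suc r" unfolding X using M(2) by (simp add: card_image)
      moreover have "X \<subseteq> {0..<Suc N}" using M(1) X by auto
      ultimately show ?thesis by simp
    qed
  qed
qed

lemma inv_partial: "inverse p * inverse q - inverse r * inverse q = inverse p * inverse (r::'a::field)"
  if "p \<noteq> 0" "q \<noteq> 0" "r \<noteq> 0" "r = p + q"
proof -
  have "inverse p = inverse p * r * inverse r" using that(3) by simp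
  also have "\<dots> = inverse p * p * inverse r + inverse p * q * inverse r"
    unfolding that(4) by (simp add: algebra_simps)
  also have "\<dots> = inverse r + inverse p * q * inverse r" using that(1) by simp
  finally have "inverse p = inverse r + inverse p * q * inverse r" .
  then have "inverse p * inverse q = inverse r * inverse q + inverse p * q * inverse r * inverse q"
    by (metis distrib_right)
  also have "inverse p * q * inverse r * inverse q = inverse p * inverse r" using that(2)
    by (simp add: field_simps)
  finally show ?thesis by simp
qed

lemma S_lemma:
  fixes x :: "'a::field"
  assumes "distinct (x # u @ v)"
  shows "(\<Sum>M | M \<subseteq> {0..<length u + length v} \<and> card M = length u. Ql (x # merge M u v))
         = (-1) ^ length u * Ql (rev u @ x # v)"
  using assms
proof (induction "length u + length v" arbitrary: x u v)
  case 0
  then have "u = []" "v = []" by auto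
  then show ?case by (simp add: merge_empty cong: conj_cong)
next
  case (Suc N)
  show ?case
  proof (cases u)
    case Nil
    have "{M. M \<subseteq> {0..<length v} \<and> card M = 0} = {{}}"
      by (auto dest: finite_subset)
    then show ?thesis using Nil by (simp add: merge_empty)
  next
    case (Cons a u')
    show ?thesis
    proof (cases v)
      case Nil
      have "M = {0..<length u}" if "M \<subseteq> {0..<length u}" "card M = length u" for M
        using card_subset_eq[OF finite_atLeastLessThan that(1)] that(2) by simp
      then have "{M. M \<subseteq> {0..<length u} \<and> card M = length u} = {{0..<length u}}"
        by auto
      then show ?thesis using Nil Ql_rev[of "x # u"] by (simp add: merge_full)
    next
      case (Cons b v')
      have N: "N = length u' + length v" "N = length u + length v'"
        using Suc.hyps \<open>u = a # u'\<close> \<open>v = b # v'\<close> by auto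
      have d: "x \<noteq> a" "x \<noteq> b" "a \<noteq> b"
        using Suc.prems \<open>u = a # u'\<close> \<open>v = b # v'\<close> by auto
      have IH1: "(\<Sum>M | M \<subseteq> {0..<N} \<and> card M = length u'. Ql (a # merge M u' v))
         = (-1) ^ length u' * Ql (rev u' @ a # v)"
      proof -
        have "distinct (a # u' @ v)" using Suc.prems \<open>u = a # u'\<close> by auto
        from Suc.hyps(1)[of u' v a, OF N(1) this] show ?thesis by (simp only: N(1))
      qed
      have IH2: "(\<Sum>M | M \<subseteq> {0..<N} \<and> card M = length u. Ql (b # merge M u v'))
         = (-1) ^ length u * Ql (rev u @ b # v')"
      proof -
        have "distinct (b # u @ v')" using Suc.prems \<open>v = b # v'\<close> by auto
        from Suc.hyps(1)[of u v' b, OF N(2) this] show ?thesis by (simp only: N(2))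
      qed
      have inj1: "inj_on (\<lambda>M. insert 0 (Suc ` M)) X" for X
      proof (rule inj_onI)
        fix A B assume "insert 0 (Suc ` A) = insert (0::nat) (Suc ` B)"
        then have "Suc ` A = Suc ` B" by (metis Zero_not_Suc image_iff insert_ident)
        then show "A = B" by (simp add: inj_image_eq_iff)
      qed
      have inj2: "inj_on (\<lambda>M. Suc ` M) X" for X
        by (rule inj_onI) (simp add: inj_image_eq_iff)
      have disj: "(\<lambda>M. insert 0 (Suc ` M)) ` A \<inter> (\<lambda>M. Suc ` M) ` B = {}" for A B
        by auto
      have fin: "finite {M. M \<subseteq> {0..<N} \<and> card M = r}" for r
        by (rule finite_subset[of _ "Pow {0..<N}"]) auto
      have "(\<Sum>M | M \<subseteq> {0..<length u + length v} \<and> card M = length u. Ql (x # merge M u v))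
          = (\<Sum>M | M \<subseteq> {0..<Suc N} \<and> card M = Suc (length u'). Ql (x # merge M u v))"
        using Suc.hyps \<open>u = a # u'\<close> by simp
      also have "\<dots> = (\<Sum>M | M \<subseteq> {0..<N} \<and> card M = length u'. Ql (x # merge (insert 0 (Suc ` M)) u v))
         + (\<Sum>M | M \<subseteq> {0..<N} \<and> card M = length u. Ql (x # merge (Suc ` M) u v))"
        unfolding split_sets
        by (subst sum.union_disjoint) (auto simp: fin disj sum.reindex inj1 inj2 \<open>u = a # u'\<close>)
      also have "\<dots> = inverse (x - a) * (\<Sum>M | M \<subseteq> {0..<N} \<and> card M = length u'. Ql (a # merge M u' v))
         + inverse (x - b) * (\<Sum>M | M \<subseteq> {0..<N} \<and> card M = length u. Ql (b # merge M u v'))"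
        by (simp add: \<open>u = a # u'\<close> \<open>v = b # v'\<close> merge_Cons1 merge_Cons2 sum_distrib_left)
      also have "\<dots> = inverse (x - a) * ((-1) ^ length u' * Ql (rev u' @ a # b # v'))
         + inverse (x - b) * ((-1) ^ Suc (length u') * Ql (rev u' @ a # b # v'))"
        unfolding IH1 IH2 by (simp add: \<open>u = a # u'\<close> \<open>v = b # v'\<close>)
      also have "\<dots> = (-1) ^ length u' * Ql (rev u' @ [a]) * Ql (b # v') *
          (inverse (x - a) * inverse (a - b) - inverse (x - b) * inverse (a - b))"
        unfolding Ql_append[of "rev u'" a b v'] by (simp add: algebra_simps)
      also have "inverse (x - a) * inverse (a - b) - inverse (x - b) * inverse (a - b)
          = - (inverse (a - x) * inverse (x - b))"
      proof -
        have "x - a \<noteq> 0" "a - b \<noteq> 0" "x - b \<noteq> 0" "a - x \<noteq> 0" using d by auto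
        then have "inverse (x - a) * inverse (a - b) - inverse (x - b) * inverse (a - b)
          = inverse (x - a) * inverse (x - b)" by (intro inv_partial) auto
        moreover have "inverse (a - x) = - inverse (x - a)"
          by (metis inverse_minus_eq minus_diff_eq)
        ultimately show ?thesis by simp
      qed
      also have "(-1) ^ length u' * Ql (rev u' @ [a]) * Ql (b # v') * - (inverse (a - x) * inverse (x - b))
          = (-1) ^ length u * Ql (rev u @ x # v)"
        using Ql_append[of "rev u'" a x v]
        by (simp add: \<open>u = a # u'\<close> \<open>v = b # v'\<close> algebra_simps)
      finally show ?thesis .
    qed
  qed
qed




lemma inj_Ccyc: "2 \<le> m \<Longrightarrow> inj (Ccyc m)"
  by (rule injI) (auto simp: Ccyc_def split: if_splits)

lemma inv_Ccyc: assumes "2 \<le> m"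
  shows "inv (Ccyc m) j = (if j = m then 1 else if 1 \<le> j \<and> j < m then Suc j else j)"
  by (rule inv_f_eq[OF inj_Ccyc[OF assms]]) (use assms in \<open>auto simp: Ccyc_def\<close>)

lemma Cinv_prod_snoc: "Cinv_prod (xs @ [m]) = inv (Ccyc m) \<circ> Cinv_prod xs"
  by (simp add: Cinv_prod_def)

lemma card_above_bound: "finite A \<Longrightarrow> A \<subseteq> {k<..<m} \<Longrightarrow> card A \<le> m - Suc k"
  using card_mono[of "{k<..<m}" A] by simp

lemma Cinv_formula:
  assumes "sorted_wrt (<) ms" "\<forall>m\<in>set ms. 2 \<le> m" "1 \<le> k"
  shows "Cinv_prod ms k = (if k \<in> set ms \<or> k = 1 then 1 else k) + card {m \<in> set ms. k < m}"
  using assms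
proof (induction ms arbitrary: k rule: rev_induct)
  case Nil
  then show ?case by (simp add: Cinv_prod_def)
next
  case (snoc m xs)
  have lt: "\<forall>x\<in>set xs. x < m" using snoc.prems(1) by (simp add: sorted_wrt_append)
  have ge: "\<forall>x\<in>set xs. 2 \<le> x" "2 \<le> m" using snoc.prems(2) by auto
  have IH: "Cinv_prod xs k = (if k \<in> set xs \<or> k = 1 then 1 else k) + card {m \<in> set xs. k < m}"
    using snoc.IH[of k] snoc.prems by (simp add: sorted_wrt_append)
  have step: "Cinv_prod (xs @ [m]) k = inv (Ccyc m) (Cinv_prod xs k)"
    by (simp add: Cinv_prod_snoc)
  consider "k = m" | "m < k" | "k < m" by linarith
  then show ?case
  proof cases
    case 1
    then have a: "k \<notin> set xs" "k \<noteq> 1" "{x \<in> set xs. k < x} = {}" using lt ge by auto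
    have b: "{x \<in> set (xs @ [m]). k < x} = {}" "k \<in> set (xs @ [m])" using lt 1 a by auto
    have "Cinv_prod xs k = k" using IH unfolding a(3) using a by simp
    then have "Cinv_prod (xs @ [m]) k = 1" using step 1 ge by (simp add: inv_Ccyc)
    then show ?thesis unfolding b(1) using b(2) by simp
  next
    case 2
    then have a: "k \<notin> set xs" "k \<noteq> 1" "{x \<in> set xs. k < x} = {}" using lt ge by auto
    have b: "{x \<in> set (xs @ [m]). k < x} = {}" "k \<notin> set (xs @ [m])" using lt 2 a by auto
    have "Cinv_prod xs k = k" using IH unfolding a(3) using a by simp
    then have "Cinv_prod (xs @ [m]) k = k" using step 2 ge by (simp add: inv_Ccyc)
    then show ?thesis unfolding b(1) using b(2) a(2) by simp
  next
    case 3
    have sub: "{x \<in> set xs. k < x} \<subseteq> {k<..<m}" using lt by auto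
    have cb: "card {x \<in> set xs. k < x} \<le> m - Suc k"
      by (rule card_above_bound[OF _ sub]) simp
    have eq: "{x \<in> set (xs @ [m]). k < x} = insert m {x \<in> set xs. k < x}" using 3 by auto
    have mn: "m \<notin> {x \<in> set xs. k < x}" using lt by auto
    have ceq: "card {x \<in> set (xs @ [m]). k < x} = Suc (card {x \<in> set xs. k < x})"
      unfolding eq using mn by simp
    have P0: "1 \<le> Cinv_prod xs k \<and> Cinv_prod xs k < m"
      using IH cb 3 snoc.prems(3) by auto
    have "Cinv_prod (xs @ [m]) k = Suc (Cinv_prod xs k)"
      using step P0 ge by (simp add: inv_Ccyc)
    moreover have "k \<in> set (xs @ [m]) \<longleftrightarrow> k \<in> set xs" using 3 by auto
    ultimately show ?thesis using IH ceq by simp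
  qed
qed

lemma Ql_map_upt: "Ql (map h [a..<Suc (a + d)]) = inverse (\<Prod>k\<in>{a..<a+d}. h k - h (Suc k))"
proof (induction d arbitrary: a)
  case 0 then show ?case by simp
next
  case (Suc d)
  have e: "[a..<Suc (a + Suc d)] = a # [Suc a..<Suc (Suc a + d)]"
    by (simp add: upt_conv_Cons del: upt_Suc)
  have e2: "[Suc a..<Suc (Suc a + d)] = Suc a # [Suc (Suc a)..<Suc (Suc a + d)]"
    by (simp add: upt_conv_Cons del: upt_Suc)
  have "Ql (map h [a..<Suc (a + Suc d)]) = inverse (h a - h (Suc a)) * Ql (map h [Suc a..<Suc (Suc a + d)])"
    unfolding e e2 by simp
  also have "\<dots> = inverse (h a - h (Suc a)) * inverse (\<Prod>k\<in>{Suc a..<Suc a+d}. h k - h (Suc k))"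
    using Suc.IH[of "Suc a"] by simp
  also have "\<dots> = inverse (\<Prod>k\<in>{a..<a+Suc d}. h k - h (Suc k))"
    by (simp add: prod.atLeast_Suc_lessThan inverse_mult_distrib del: prod.op_ivl_Suc)
  finally show ?case .
qed

lemma Qf_Ql: "1 \<le> n \<Longrightarrow> Qf y n g = Ql (map (y \<circ> g) [1..<Suc n])"
  using Ql_map_upt[of "y \<circ> g" 1 "n - 1"] by (simp add: Qf_def divide_inverse)

lemma card_split3: "finite M \<Longrightarrow>
   card {m\<in>M. m < k} + card {m\<in>M. k < (m::nat)} + (if k \<in> M then 1 else 0) = card M"
proof -
  assume f: "finite M"
  have "M = ({m\<in>M. m < k} \<union> {m\<in>M. k < m}) \<union> (M \<inter> {k})" by auto
  then have "card M = card ({m\<in>M. m < k} \<union> {m\<in>M. k < m}) + card (M \<inter> {k})"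
    using f by (subst card_Un_disjoint[symmetric]) auto
  also have "card ({m\<in>M. m < k} \<union> {m\<in>M. k < m}) = card {m\<in>M. m < k} + card {m\<in>M. k < m}"
    using f by (intro card_Un_disjoint) auto
  also have "card (M \<inter> {k}) = (if k \<in> M then 1 else 0)" by auto
  finally show ?thesis by simp
qed

lemma card_split_below: "card ({..<k} - M) + card {m\<in>M. m < k} = (k::nat)"
proof -
  have "{..<k} = ({..<k} - M) \<union> {m\<in>M. m < k}" by auto
  then have "card {..<k} = card ({..<k} - M) + card {m\<in>M. m < k}"
    by (subst card_Un_disjoint[symmetric]) auto
  then show ?thesis by simp
qed



declare upt_Suc[simp del]

lemma key_term:
  fixes f :: "nat \<Rightarrow> 'a::field" and y :: "nat \<Rightarrow> 'a"
  assumes n: "2 \<le> i" "i \<le> n" and M': "M' \<subseteq> {0..<n-1}" "card M' = i - 1"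
    and f: "f = y \<circ> \<sigma>"
  shows "Qf y n (\<sigma> \<circ> Cinv_prod (sorted_list_of_set ((\<lambda>m. m + 2) ` M'))) =
         Ql (f i # merge M' (rev (map f [1..<i])) (map f [Suc i..<Suc n]))"
proof -
  define M where "M = (\<lambda>m. m + 2) ` M'"
  define P where "P = Cinv_prod (sorted_list_of_set M)"
  have finM': "finite M'" using M' finite_subset by blast
  have finM: "finite M" unfolding M_def using finM' by simp
  have Pf: "P k = (if k \<in> M \<or> k = 1 then 1 else k) + card {m \<in> M. k < m}" if "1 \<le> k" for k
    unfolding P_def using Cinv_formula[of "sorted_list_of_set M" k] finM that
    by (simp add: strict_sorted_list_of_set M_def)
  have cardM: "card M = i - 1" unfolding M_def using M'(2) by (subst card_image) (auto simp: inj_on_def)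
  have cabove: "card {m \<in> M. k + 2 < m} = card {m \<in> M'. k < m}" for k
  proof -
    have "{m \<in> M. k + 2 < m} = (\<lambda>m. m + 2) ` {m \<in> M'. k < m}" unfolding M_def by auto
    moreover have "card ((\<lambda>m. m + 2) ` {m \<in> M'. k < m}) = card {m \<in> M'. k < m}"
      by (rule card_image) (auto simp: inj_on_def)
    ultimately show ?thesis by simp
  qed
  have memM: "k + 2 \<in> M \<longleftrightarrow> k \<in> M'" for k unfolding M_def by auto
  have "Qf y n (\<sigma> \<circ> P) = Ql (map (f \<circ> P) [1..<Suc n])"
    using Qf_Ql[of n y "\<sigma> \<circ> P"] n f by (simp add: comp_assoc)
  also have "map (f \<circ> P) [1..<Suc n] = f i # merge M' (rev (map f [1..<i])) (map f [Suc i..<Suc n])"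
  proof (rule nth_equalityI)
    show "length (map (f \<circ> P) [1..<Suc n]) = length (f i # merge M' (rev (map f [1..<i])) (map f [Suc i..<Suc n]))"
      using n by simp
  next
    fix j assume j: "j < length (map (f \<circ> P) [1..<Suc n])"
    then have jn: "j < n" by simp
    show "map (f \<circ> P) [1..<Suc n] ! j = (f i # merge M' (rev (map f [1..<i])) (map f [Suc i..<Suc n])) ! j"
    proof (cases j)
      case 0
      have "{m \<in> M. 1 < m} = M" unfolding M_def by auto
      then have "P 1 = i" using Pf[of 1] cardM n by simp
      then show ?thesis using 0 jn by simp
    next
      case (Suc k)
      have kn: "k < n - 1" using Suc jn by simp
      have lhs: "map (f \<circ> P) [1..<Suc n] ! j = f (P (k + 2))" using Suc jn by simp
      have Pk: "P (k + 2) = (if k \<in> M' then 1 else k + 2) + card {m \<in> M'. k < m}"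
        using Pf[of "k+2"] memM[of k] cabove[of k] by simp
      have s3: "card {m\<in>M'. m < k} + card {m\<in>M'. k < m} + (if k \<in> M' then 1 else 0) = i - 1"
        using card_split3[OF finM', of k] M' by simp
      have sb: "card ({..<k} - M') + card {m\<in>M'. m < k} = k" by (rule card_split_below)
      have cab: "card {m\<in>M'. k < m} \<le> n - 1 - Suc k"
        by (rule card_above_bound) (use finM' M' in auto)
      have rhs: "(f i # merge M' (rev (map f [1..<i])) (map f [Suc i..<Suc n])) ! j =
          (if k \<in> M' then rev (map f [1..<i]) ! card {m\<in>M'. m < k}
           else map f [Suc i..<Suc n] ! card ({..<k} - M'))"
        using Suc kn n by (simp add: merge_def)
      show ?thesis
      proof (cases "k \<in> M'")
        case True
        have lt: "card {m\<in>M'. m < k} < i - 1" using s3 True by simp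
        have "rev (map f [1..<i]) ! card {m\<in>M'. m < k} = f (1 + (i - 1 - Suc (card {m\<in>M'. m < k})))"
          using lt n by (simp add: rev_nth)
        also have "1 + (i - 1 - Suc (card {m\<in>M'. m < k})) = P (k + 2)"
          using Pk True s3 n by simp
        finally show ?thesis using lhs rhs True by simp
      next
        case False
        have lt: "card ({..<k} - M') < n - i" using s3 sb cab False kn n by simp
        have "map f [Suc i..<Suc n] ! card ({..<k} - M') = f (Suc i + card ({..<k} - M'))"
          using lt n by simp
        also have "Suc i + card ({..<k} - M') = P (k + 2)"
          using Pk False s3 sb n by simp
        finally show ?thesis using lhs rhs False by simp
      qed
    qed
  qed
  finally show ?thesis unfolding P_def M_def .
qed




theorem lemma3p5:
  fixes y :: "nat \<Rightarrow> 'a::field" and n i :: nat and \<sigma> :: "nat \<Rightarrow> nat"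
  assumes "n \<ge> 2" and "2 \<le> i" and "i \<le> n"
    and "inj_on y {1..n}"
    and "\<exists>\<tau>. \<tau> permutes {1..n} \<and> \<tau> 1 = 1 \<and> \<sigma> = \<tau> \<circ> transpose 1 i"
  shows "Qf y n \<sigma> = (-1) ^ (i - 1) *
    (\<Sum>M | M \<subseteq> {2..n} \<and> card M = i - 1.
        Qf y n (\<sigma> \<circ> Cinv_prod (sorted_list_of_set M)))"
proof -
  obtain \<tau> where \<tau>: "\<tau> permutes {1..n}" "\<sigma> = \<tau> \<circ> transpose 1 i" using assms(5) by blast
  have sp: "\<sigma> permutes {1..n}" unfolding \<tau>(2)
    by (rule permutes_compose[OF permutes_swap_id \<tau>(1)]) (use assms in auto)
  define f where "f = y \<circ> \<sigma>"
  have injf: "inj_on f {1..n}" unfolding f_def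
  proof (rule comp_inj_on)
    show "inj_on \<sigma> {1..n}" using sp permutes_inj_on by blast
    show "inj_on y (\<sigma> ` {1..n})" using assms(4) permutes_image[OF sp] by simp
  qed
  define \<alpha> where "\<alpha> = map f [1..<i]"
  define \<beta> where "\<beta> = map f [Suc i..<Suc n]"
  have upt: "[1..<Suc n] = [1..<i] @ i # [Suc i..<Suc n]"
  proof -
    have "[1..<Suc n] = [1..<i] @ [i..<Suc n]"
      using upt_add_eq_append[of 1 i "Suc n - i"] assms by simp
    also have "[i..<Suc n] = i # [Suc i..<Suc n]" using assms by (simp add: upt_conv_Cons del: upt_Suc)
    finally show ?thesis .
  qed
  have L: "map f [1..<Suc n] = \<alpha> @ f i # \<beta>" unfolding \<alpha>_def \<beta>_def upt by simp
  have dL: "distinct (map f [1..<Suc n])"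
    using injf by (simp add: distinct_map atLeastLessThanSuc_atLeastAtMost)
  have d: "distinct (f i # rev \<alpha> @ \<beta>)" using dL unfolding L by auto
  have len: "length (rev \<alpha>) + length \<beta> = n - 1" "length (rev \<alpha>) = i - 1"
    unfolding \<alpha>_def \<beta>_def using assms by auto
  have S: "(\<Sum>M | M \<subseteq> {0..<n-1} \<and> card M = i - 1. Ql (f i # merge M (rev \<alpha>) \<beta>))
        = (-1) ^ (i - 1) * Qf y n \<sigma>"
  proof -
    have "Qf y n \<sigma> = Ql (\<alpha> @ f i # \<beta>)" using Qf_Ql[of n y \<sigma>] assms L f_def by simp
    then show ?thesis using S_lemma[OF d, unfolded len(1), unfolded len(2)] by simp
  qed
  have hback: "(\<lambda>m. m + 2) ` (\<lambda>m. m - 2) ` M = M" if hM: "M \<subseteq> {2..n}" for M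
  proof -
    have "(\<lambda>m. m + 2) ` (\<lambda>m. m - 2) ` M = (\<lambda>m. m - 2 + 2) ` M" by (simp add: image_image)
    also have "\<dots> = id ` M" by (rule image_cong) (use hM in force)+
    finally show ?thesis by simp
  qed
  have R: "(\<Sum>M | M \<subseteq> {2..n} \<and> card M = i - 1. Qf y n (\<sigma> \<circ> Cinv_prod (sorted_list_of_set M)))
     = (\<Sum>M | M \<subseteq> {0..<n-1} \<and> card M = i - 1. Qf y n (\<sigma> \<circ> Cinv_prod (sorted_list_of_set ((\<lambda>m. m + 2) ` M))))"
  proof (rule sum.reindex_bij_witness[of _ "\<lambda>M. (\<lambda>m. m + 2) ` M" "\<lambda>M. (\<lambda>m. m - 2) ` M"])
    fix M assume M: "M \<in> {M. M \<subseteq> {2..n} \<and> card M = i - 1}"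
    then show "(\<lambda>m. m + 2) ` (\<lambda>m. m - 2) ` M = M" using hback by blast
    have "inj_on (\<lambda>m. m - 2) M"
    proof (rule inj_onI)
      fix a b assume ab: "a \<in> M" "b \<in> M" "a - 2 = b - (2::nat)"
      have "2 \<le> a" "2 \<le> b" using M ab(1,2) by auto
      then show "a = b" using ab(3) by simp
    qed
    moreover have "(\<lambda>m. m - 2) ` M \<subseteq> {0..<n-1}"
    proof
      fix x assume "x \<in> (\<lambda>m. m - 2) ` M"
      then obtain m where "m \<in> M" "x = m - 2" by auto
      moreover have "2 \<le> m" "m \<le> n" using M \<open>m \<in> M\<close> by auto
      ultimately show "x \<in> {0..<n-1}" by simp
    qed
    ultimately show "(\<lambda>m. m - 2) ` M \<in> {M. M \<subseteq> {0..<n-1} \<and> card M = i - 1}"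
      using M by (simp add: card_image)
  next
    fix M assume M: "M \<in> {M. M \<subseteq> {0..<n-1} \<and> card M = i - 1}"
    then show "(\<lambda>m. m - 2) ` (\<lambda>m. m + 2) ` M = M"
      by (simp add: image_image)
    have "inj_on (\<lambda>m. m + 2) M" by (auto simp: inj_on_def)
    then show "(\<lambda>m. m + 2) ` M \<in> {M. M \<subseteq> {2..n} \<and> card M = i - 1}"
      using M assms by (auto simp: card_image)
  qed (use hback in auto)
  also have "\<dots> = (\<Sum>M | M \<subseteq> {0..<n-1} \<and> card M = i - 1. Ql (f i # merge M (rev \<alpha>) \<beta>))"
    by (rule sum.cong[OF refl]) (use key_term[OF assms(2,3) _ _ f_def] in \<open>auto simp: \<alpha>_def \<beta>_def\<close>)
  finally have R': "(\<Sum>M | M \<subseteq> {2..n} \<and> card M = i - 1. Qf y n (\<sigma> \<circ> Cinv_prod (sorted_list_of_set M)))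
     = (-1) ^ (i - 1) * Qf y n \<sigma>" using S by simp
  have "((-1::'a) ^ (i - 1)) * (-1) ^ (i - 1) = 1" by (simp flip: power_add)
  then show ?thesis unfolding R' by (simp add: mult.assoc[symmetric])
qed


end
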